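(* Let $\beta>0$, let $F$ be symmetric, positive on $\Gamma_+$, homogeneous of degree 1, with $F^\beta(1,\dots,1)=1$ and $\partial F/\partial\lambda_i>0$, and let $G$ be a smooth positive function on $\{(x,X)\in\mathbb{S}^n\times\mathbb{R}^{n+1}:\langle x,X\rangle>0\}$ with $$\limsup_{s\to+\infty}\Big[\max_{x\in\mathbb{S}^n}G(x,sx)s^\beta\Big]<1<\liminf_{s\to0^+}\Big[\min_{x\in\mathbb{S}^n}G(x,sx)s^\beta\Big].$$ Let $u$ be a smooth, strictly convex (positive) solution of $\frac{\partial u}{\partial t}=\big(G(x,ux+Du)F^\beta(D^2u+uI)-1\big)u$ on $\mathbb{S}^n\times[0,T^* )$. Then $\frac1{C}\le u(x,t)\le C$ on $\mathbb{S}^n\times[0,T^* )$, where $C>0$ depends only on the two limits above, $\max_{\mathbb{S}^n}u(\cdot,0)$ and $\min_{\mathbb{S}^n}u(\cdot,0)$.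
   Context: $\Gamma_+=\{\lambda\in\mathbb{R}^n:\lambda_i>0\}$; $F$ is applied to symmetric matrices via eigenvalues. $D$ is covariant differentiation on the round $\mathbb{S}^n$, $I$ the identity; strictly convex means $D^2u+uI>0$. *)

theory Defs
  imports "HOL-Analysis.Analysis" "HOL-Library.Liminf_Limsup"
begin

definition ddir :: "'a::real_normed_vector \<Rightarrow> ('a \<Rightarrow> real) \<Rightarrow> ('a \<Rightarrow> real)" where
  "ddir v f = (\<lambda>x. frechet_derivative f (at x) v)"

definition smooth_on :: "'a::euclidean_space set \<Rightarrow> ('a \<Rightarrow> real) \<Rightarrow> bool" where
  "smooth_on S f \<longleftrightarrow> open S \<and>
     (\<forall>vs::'a list. \<forall>x\<in>S. (foldr ddir vs f) differentiable (at x))"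

definition smooth_on_set :: "'a::euclidean_space set \<Rightarrow> ('a \<Rightarrow> real) \<Rightarrow> bool" where
  "smooth_on_set A f \<longleftrightarrow> (\<exists>U g. A \<subseteq> U \<and> smooth_on U g \<and> (\<forall>p\<in>A. g p = f p))"

definition tangent :: "real^'m \<Rightarrow> (real^'m) set" where
  "tangent x = {v. v \<bullet> x = 0}"

text \<open>0-homogeneous extension of a function on the sphere to R^(n+1) - {0}.\<close>
definition sph_ext :: "(real^'m \<Rightarrow> real \<Rightarrow> real) \<Rightarrow> real \<Rightarrow> real^'m \<Rightarrow> real" where
  "sph_ext u t y = u (scaleR (1 / norm y) y) t"

text \<open>Spherical gradient Du (a tangent vector in R^(n+1)).\<close>
definition sph_grad :: "(real^'m \<Rightarrow> real \<Rightarrow> real) \<Rightarrow> real \<Rightarrow> real^'m \<Rightarrow> real^'m" where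
  "sph_grad u t x = (\<chi> i. frechet_derivative (sph_ext u t) (at x) (axis i 1))"

text \<open>Covariant Hessian D^2 u at x, applied to tangent vectors v w. For the 0-homogeneous
  extension (radial derivative 0) it equals the Euclidean Hessian restricted to T_x S^n.\<close>
definition sph_hess :: "(real^'m \<Rightarrow> real \<Rightarrow> real) \<Rightarrow> real \<Rightarrow> real^'m \<Rightarrow> real^'m \<Rightarrow> real^'m \<Rightarrow> real" where
  "sph_hess u t x v w = frechet_derivative (ddir v (sph_ext u t)) (at x) w"

definition Wform :: "(real^'m \<Rightarrow> real \<Rightarrow> real) \<Rightarrow> real \<Rightarrow> real^'m \<Rightarrow> real^'m \<Rightarrow> real^'m \<Rightarrow> real" where
  "Wform u t x v w = sph_hess u t x v w + u x t * (v \<bullet> w)"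

text \<open>lam is a tuple of eigenvalues of the symmetric form Q on T_x S^n (w.r.t. the round metric):
  there is an orthonormal family (hence basis, as CARD('k) = n) of T_x diagonalising Q.\<close>
definition is_eigs :: "real^'m \<Rightarrow> (real^'m \<Rightarrow> real^'m \<Rightarrow> real) \<Rightarrow> real^'k \<Rightarrow> bool" where
  "is_eigs x Q lam \<longleftrightarrow> (\<exists>e :: 'k \<Rightarrow> real^'m.
      (\<forall>i. e i \<in> tangent x) \<and>
      (\<forall>i j. e i \<bullet> e j = (if i = j then 1 else 0)) \<and>
      (\<forall>i j. Q (e i) (e j) = (if i = j then lam $ i else 0)))"

text \<open>F applied to a symmetric form via its eigenvalues (well defined since F is symmetric).\<close>
definition Fop :: "(real^'k \<Rightarrow> real) \<Rightarrow> real^'m \<Rightarrow> (real^'m \<Rightarrow> real^'m \<Rightarrow> real) \<Rightarrow> real" where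
  "Fop F x Q = F (SOME lam. is_eigs x Q lam)"

definition posdef_on_tangent :: "real^'m \<Rightarrow> (real^'m \<Rightarrow> real^'m \<Rightarrow> real) \<Rightarrow> bool" where
  "posdef_on_tangent x Q \<longleftrightarrow> (\<forall>v\<in>tangent x. v \<noteq> 0 \<longrightarrow> Q v v > 0)"

definition Gamma_plus :: "(real^'k) set" where
  "Gamma_plus = {lam. \<forall>i. lam $ i > 0}"

definition admissible_F :: "real \<Rightarrow> (real^'k \<Rightarrow> real) \<Rightarrow> bool" where
  "admissible_F \<beta> F \<longleftrightarrow>
     (\<forall>\<sigma> lam. \<sigma> permutes (UNIV::'k set) \<longrightarrow> lam \<in> Gamma_plus \<longrightarrow> F (\<chi> i. lam $ (\<sigma> i)) = F lam) \<and>
     (\<forall>lam\<in>Gamma_plus. F lam > 0) \<and>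
     (\<forall>s>0. \<forall>lam\<in>Gamma_plus. F (s *\<^sub>R lam) = s * F lam) \<and>
     (F (\<chi> i. 1)) powr \<beta> = 1 \<and>
     (\<forall>lam\<in>Gamma_plus. F differentiable (at lam) \<and>
        (\<forall>i. frechet_derivative F (at lam) (axis i 1) > 0))"

definition flow_solution ::
  "(real^'m \<Rightarrow> real^'m \<Rightarrow> real) \<Rightarrow> real \<Rightarrow> (real^'k \<Rightarrow> real) \<Rightarrow> (real^'m \<Rightarrow> real \<Rightarrow> real) \<Rightarrow> ereal \<Rightarrow> bool" where
  "flow_solution G \<beta> F u T \<longleftrightarrow>
     T > 0 \<and>
     smooth_on_set {(y, t). y \<noteq> 0 \<and> 0 \<le> t \<and> ereal t < T} (\<lambda>(y, t). sph_ext u t y) \<and>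
     (\<forall>x\<in>sphere 0 1. \<forall>t. 0 \<le> t \<and> ereal t < T \<longrightarrow>
        u x t > 0 \<and>
        posdef_on_tangent x (Wform u t x) \<and>
        ((\<lambda>s. u x s) has_real_derivative
            ((G x (u x t *\<^sub>R x + sph_grad u t x) * (Fop F x (Wform u t x)) powr \<beta> - 1) * u x t))
          (at t within {s. 0 \<le> s \<and> ereal s < T}))"

end

theory Submission
  imports Defs
begin

lemma bil_quad_expand:
  assumes bl: "bilinear Q" and sym: "\<And>v w. Q v w = Q w v"
  shows "Q (a + s *\<^sub>R b) (a + s *\<^sub>R b) = Q a a + 2 * s * Q a b + s\<^sup>2 * Q b b"
proof -
  have "Q (a + s *\<^sub>R b) (a + s *\<^sub>R b) = Q a a + Q a (s *\<^sub>R b) + (Q (s *\<^sub>R b) a + Q (s *\<^sub>R b) (s *\<^sub>R b))"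
    by (simp add: bilinear_ladd[OF bl] bilinear_radd[OF bl])
  also have "\<dots> = Q a a + s * Q a b + (s * Q b a + s * (s * Q b b))"
    by (simp add: bilinear_lmul[OF bl] bilinear_rmul[OF bl])
  finally show ?thesis using sym[of b a] by (simp add: power2_eq_square algebra_simps)
qed

lemma bil_quad_scale:
  assumes bl: "bilinear Q"
  shows "Q (c *\<^sub>R a) (c *\<^sub>R a) = c\<^sup>2 * Q a a"
  by (simp add: bilinear_lmul[OF bl] bilinear_rmul[OF bl] power2_eq_square)

lemma max_quad_orth:
  fixes Q :: "'a::euclidean_space \<Rightarrow> 'a \<Rightarrow> real"
  assumes bl: "bilinear Q" and sym: "\<And>v w. Q v w = Q w v"
    and S: "subspace S" and v1: "v1 \<in> S" "norm v1 = 1"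
    and mx: "\<And>v. v \<in> S \<Longrightarrow> norm v = 1 \<Longrightarrow> Q v v \<le> Q v1 v1"
    and w: "w \<in> S" "v1 \<bullet> w = 0"
  shows "Q v1 w = 0"
proof -
  define l where "l = Q v1 v1"
  have gen: "Q v v \<le> l * (norm v)\<^sup>2" if "v \<in> S" for v
  proof (cases "v = 0")
    case True then show ?thesis by (simp add: bilinear_lzero[OF bl])
  next
    case False
    let ?u = "(1 / norm v) *\<^sub>R v"
    have "?u \<in> S" using S that by (simp add: subspace_scale)
    moreover have "norm ?u = 1" using False by simp
    ultimately have "Q ?u ?u \<le> l" using mx l_def by blast
    then have "(1 / norm v)\<^sup>2 * Q v v \<le> l" by (simp add: bil_quad_scale[OF bl])
    then show ?thesis using False by (simp add: field_simps power2_eq_square)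
  qed
  define a where "a = Q v1 w"
  define b where "b = Q w w - l * (norm w)\<^sup>2"
  have ineq: "2 * s * a + s\<^sup>2 * b \<le> 0" for s
  proof -
    have "v1 + s *\<^sub>R w \<in> S" using S v1 w by (simp add: subspace_add subspace_scale)
    then have "Q (v1 + s *\<^sub>R w) (v1 + s *\<^sub>R w) \<le> l * (norm (v1 + s *\<^sub>R w))\<^sup>2" by (rule gen)
    moreover have "(norm (v1 + s *\<^sub>R w))\<^sup>2 = 1 + s\<^sup>2 * (norm w)\<^sup>2"
    proof -
      have "v1 \<bullet> v1 = 1" using v1 by (simp add: dot_square_norm)
      moreover have "w \<bullet> v1 = 0" using w by (simp add: inner_commute)
      ultimately show ?thesis unfolding power2_norm_eq_inner using w
        by (simp add: inner_add_left inner_add_right power2_eq_square)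
    qed
    ultimately show ?thesis unfolding a_def b_def l_def
      by (simp add: bil_quad_expand[OF bl sym] algebra_simps)
  qed
  show ?thesis
  proof (rule ccontr)
    assume "Q v1 w \<noteq> 0"
    then have a0: "a\<^sup>2 > 0" by (simp add: a_def)
    define t where "t = 1 / (\<bar>b\<bar> + 1)"
    have t0: "t > 0" by (simp add: t_def add_pos_nonneg)
    have tb: "t * \<bar>b\<bar> < 1" unfolding t_def by (simp add: field_simps)
    have "2 * (t * a) * a + (t * a)\<^sup>2 * b \<le> 0" by (rule ineq)
    moreover have "2 * (t * a) * a + (t * a)\<^sup>2 * b = (t * a\<^sup>2) * (2 + t * b)"
      by algebra
    ultimately have le: "(t * a\<^sup>2) * (2 + t * b) \<le> 0" by simp
    have "t * (- b) \<le> t * \<bar>b\<bar>" by (rule mult_left_mono) (use t0 in auto)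
    then have p1: "2 + t * b > 0" using tb by simp
    have p2: "t * a\<^sup>2 > 0" using t0 a0 by simp
    have "(t * a\<^sup>2) * (2 + t * b) > 0" by (rule mult_pos_pos[OF p2 p1])
    then show False using le by simp
  qed
qed

lemma spectral_aux:
  fixes Q :: "'a::euclidean_space \<Rightarrow> 'a \<Rightarrow> real"
  assumes bl: "bilinear Q" and sym: "\<And>v w. Q v w = Q w v"
  shows "subspace S \<Longrightarrow> d \<le> dim S \<Longrightarrow> \<exists>B. B \<subseteq> S \<and> finite B \<and> card B = d \<and>
     (\<forall>b\<in>B. norm b = 1) \<and> (\<forall>b\<in>B. \<forall>c\<in>B. b \<noteq> c \<longrightarrow> b \<bullet> c = 0 \<and> Q b c = 0)"
proof (induction d arbitrary: S)
  case 0
  then show ?case by (intro exI[of _ "{}"]) auto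
next
  case (Suc d)
  have "S \<noteq> {0}" using Suc.prems by auto
  then obtain z where z: "z \<in> S" "z \<noteq> 0" using Suc.prems subspace_0 by blast
  let ?K = "S \<inter> sphere 0 1"
  have "(1 / norm z) *\<^sub>R z \<in> ?K" using z Suc.prems(1) by (simp add: subspace_scale)
  then have Kne: "?K \<noteq> {}" by blast
  have Kc: "compact ?K" using Suc.prems(1) by (simp add: closed_Int_compact closed_subspace)
  have bb: "bounded_bilinear Q" using bl bilinear_conv_bounded_bilinear by blast
  have "continuous_on ?K (\<lambda>v. Q v v)"
    by (intro continuous_intros bounded_bilinear.continuous_on[OF bb])
  then obtain v1 where v1: "v1 \<in> ?K" and mx: "\<And>v. v \<in> ?K \<Longrightarrow> Q v v \<le> Q v1 v1"
    using continuous_attains_sup[OF Kc Kne] by blast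
  define S' where "S' = S \<inter> {w. v1 \<bullet> w = 0}"
  have sS': "subspace S'" unfolding S'_def using Suc.prems(1) subspace_hyperplane[of v1] by (rule subspace_inter)
  have "S \<subseteq> span (insert v1 S')"
  proof
    fix w assume "w \<in> S"
    have nv: "v1 \<bullet> v1 = 1" using v1 by (simp add: dot_square_norm)
    have "w - (v1 \<bullet> w) *\<^sub>R v1 \<in> S'" unfolding S'_def using \<open>w \<in> S\<close> v1 Suc.prems(1) nv
      by (auto simp: subspace_diff subspace_scale inner_diff_right)
    then have "(v1 \<bullet> w) *\<^sub>R v1 + (w - (v1 \<bullet> w) *\<^sub>R v1) \<in> span (insert v1 S')"
      by (intro span_add span_scale) (auto intro: span_base)
    then show "w \<in> span (insert v1 S')" by simp
  qed
  then have "dim S \<le> dim (insert v1 S')" by (metis dim_span dim_subset)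
  also have "\<dots> \<le> dim S' + 1" by (simp add: dim_insert)
  finally have "d \<le> dim S'" using Suc.prems(2) by simp
  then obtain B where B: "B \<subseteq> S'" "finite B" "card B = d" "\<forall>b\<in>B. norm b = 1"
     "\<forall>b\<in>B. \<forall>c\<in>B. b \<noteq> c \<longrightarrow> b \<bullet> c = 0 \<and> Q b c = 0"
    using Suc.IH[OF sS'] by blast
  have orth: "v1 \<bullet> c = 0 \<and> Q v1 c = 0" if "c \<in> B" for c
  proof -
    have c: "c \<in> S" "v1 \<bullet> c = 0" using that B(1) S'_def by auto
    show ?thesis using c max_quad_orth[OF bl sym Suc.prems(1), of v1 c] v1 mx by auto
  qed
  have "v1 \<notin> B"
  proof
    assume "v1 \<in> B"
    then have "v1 \<bullet> v1 = 0" using orth by blast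
    then show False using v1 by simp
  qed
  have h1: "insert v1 B \<subseteq> S" using v1 B(1) S'_def by auto
  have h2: "finite (insert v1 B)" using B by simp
  have h3: "card (insert v1 B) = Suc d" using B \<open>v1 \<notin> B\<close> by simp
  have h4: "\<forall>b\<in>insert v1 B. norm b = 1" using B v1 by auto
  have h5: "\<forall>b\<in>insert v1 B. \<forall>c\<in>insert v1 B. b \<noteq> c \<longrightarrow> b \<bullet> c = 0 \<and> Q b c = 0"
  proof (intro ballI impI)
    fix b c assume b: "b \<in> insert v1 B" and c: "c \<in> insert v1 B" and bc: "b \<noteq> c"
    show "b \<bullet> c = 0 \<and> Q b c = 0"
    proof (cases "b = v1")
      case True then show ?thesis using c bc orth by auto
    next
      case False
      then have bB: "b \<in> B" using b by simp
      show ?thesis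
      proof (cases "c = v1")
        case True
        have "v1 \<bullet> b = 0 \<and> Q v1 b = 0" using orth[OF bB] .
        then show ?thesis using True sym[of b v1] inner_commute[of b v1] by simp
      next
        case False2: False
        then have "c \<in> B" using c by simp
        then show ?thesis using bB bc B(5) by blast
      qed
    qed
  qed
  show ?case using h1 h2 h3 h4 h5 by blast
qed

lemma smooth_open: "smooth_on W f \<Longrightarrow> open W" by (simp add: smooth_on_def)

lemma smooth_diff: "smooth_on W f \<Longrightarrow> x \<in> W \<Longrightarrow> (foldr ddir vs f) differentiable (at x)"
  by (simp add: smooth_on_def)

lemma smooth_local:
  assumes sm: "smooth_on U g" and oW: "open W" and sub: "W \<subseteq> U" and eq0: "\<And>y. y \<in> W \<Longrightarrow> f y = g y"
  shows "smooth_on W f"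
proof -
  have eq: "\<forall>y\<in>W. foldr ddir vs f y = foldr ddir vs g y" for vs
  proof (induction vs)
    case Nil then show ?case using eq0 by simp
  next
    case (Cons v vs)
    show ?case
    proof
      fix y assume y: "y \<in> W"
      have d: "(foldr ddir vs g has_derivative frechet_derivative (foldr ddir vs g) (at y)) (at y)"
        using sm sub y by (auto simp: smooth_on_def frechet_derivative_works[symmetric])
      have "(foldr ddir vs f has_derivative frechet_derivative (foldr ddir vs g) (at y)) (at y)"
        by (rule has_derivative_transform_within_open[OF d oW y]) (use Cons in auto)
      then have "frechet_derivative (foldr ddir vs f) (at y) = frechet_derivative (foldr ddir vs g) (at y)"
        by (metis frechet_derivative_at)
      then show "foldr ddir (v # vs) f y = foldr ddir (v # vs) g y" by (simp add: ddir_def)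
    qed
  qed
  show ?thesis unfolding smooth_on_def
  proof (intro conjI allI ballI)
    show "open W" by fact
    fix vs y assume y: "y \<in> W"
    have "foldr ddir vs g differentiable (at y)" using sm sub y by (auto simp: smooth_on_def)
    then obtain D where "(foldr ddir vs g has_derivative D) (at y)" by (auto simp: differentiable_def)
    then have "(foldr ddir vs f has_derivative D) (at y)"
      by (rule has_derivative_transform_within_open[OF _ oW y]) (use eq in auto)
    then show "foldr ddir vs f differentiable (at y)" by (auto simp: differentiable_def)
  qed
qed

lemma slice_deriv:
  fixes h :: "('a::euclidean_space \<times> real) \<Rightarrow> real"
  assumes oU: "open Ut" and y0: "y0 \<in> Ut" and eq: "\<And>y. y \<in> Ut \<Longrightarrow> F y = h (y, t)"
    and dh: "h differentiable (at (y0, t))"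
  shows "(F has_derivative (\<lambda>v. frechet_derivative h (at (y0, t)) (v, 0))) (at y0)"
proof -
  have d1: "((\<lambda>y. (y, t)) has_derivative (\<lambda>v. (v, 0))) (at y0)"
    by (intro derivative_eq_intros) auto
  have d2: "(h has_derivative frechet_derivative h (at (y0, t))) (at ((\<lambda>y. (y, t)) y0))"
    using dh by (simp add: frechet_derivative_works[symmetric])
  have "((h \<circ> (\<lambda>y. (y, t))) has_derivative (frechet_derivative h (at (y0, t)) \<circ> (\<lambda>v. (v, 0)))) (at y0)"
    by (rule diff_chain_at[OF d1 d2])
  then have "((\<lambda>y. h (y, t)) has_derivative (\<lambda>v. frechet_derivative h (at (y0, t)) (v, 0))) (at y0)"
    by (simp add: o_def)
  then show ?thesis
    by (rule has_derivative_transform_within_open[OF _ oU y0]) (use eq in auto)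
qed

lemma smooth_slice:
  fixes g :: "('a::euclidean_space \<times> real) \<Rightarrow> real"
  assumes sm: "smooth_on U g"
  shows "smooth_on {y. (y, t) \<in> U} (\<lambda>y. g (y, t))"
proof -
  let ?Ut = "{y. (y, t) \<in> U}"
  have oU: "open ?Ut"
  proof -
    have "?Ut = (\<lambda>y. (y, t)) -` U" by auto
    moreover have "open ((\<lambda>y. (y, t)) -` U)"
      by (rule continuous_open_vimage) (use sm in \<open>auto simp: smooth_on_def intro!: continuous_intros\<close>)
    ultimately show ?thesis by simp
  qed
  have eq: "\<forall>y\<in>?Ut. foldr ddir vs (\<lambda>y. g (y, t)) y = foldr ddir (map (\<lambda>v. (v, 0)) vs) g (y, t)" for vs
  proof (induction vs)
    case Nil then show ?case by simp
  next
    case (Cons v vs)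
    show ?case
    proof
      fix y assume y: "y \<in> ?Ut"
      let ?h = "foldr ddir (map (\<lambda>v. (v, 0)) vs) g"
      have "?h differentiable (at (y, t))" using sm y by (auto simp: smooth_on_def)
      from slice_deriv[OF oU y _ this, of "foldr ddir vs (\<lambda>y. g (y, t))"] Cons
      have "(foldr ddir vs (\<lambda>y. g (y, t)) has_derivative (\<lambda>v. frechet_derivative ?h (at (y, t)) (v, 0))) (at y)"
        by auto
      then have "frechet_derivative (foldr ddir vs (\<lambda>y. g (y, t))) (at y) = (\<lambda>v. frechet_derivative ?h (at (y, t)) (v, 0))"
        by (metis frechet_derivative_at)
      then show "foldr ddir (v # vs) (\<lambda>y. g (y, t)) y = foldr ddir (map (\<lambda>v. (v, 0)) (v # vs)) g (y, t)"
        by (simp add: ddir_def)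
    qed
  qed
  show ?thesis unfolding smooth_on_def
  proof (intro conjI allI ballI)
    show "open ?Ut" by (rule oU)
    fix vs y assume y: "y \<in> ?Ut"
    let ?h = "foldr ddir (map (\<lambda>v. (v, 0)) vs) g"
    have "?h differentiable (at (y, t))" using sm y by (auto simp: smooth_on_def)
    from slice_deriv[OF oU y _ this, of "foldr ddir vs (\<lambda>y. g (y, t))"] eq
    show "foldr ddir vs (\<lambda>y. g (y, t)) differentiable (at y)" by (auto simp: differentiable_def)
  qed
qed

lemma line_deriv:
  assumes "\<phi> differentiable (at (p + s *\<^sub>R v))"
  shows "((\<lambda>s. \<phi> (p + s *\<^sub>R v)) has_real_derivative frechet_derivative \<phi> (at (p + s *\<^sub>R v)) v) (at s)"
proof -
  let ?D = "frechet_derivative \<phi> (at (p + s *\<^sub>R v))"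
  have d1: "((\<lambda>s. p + s *\<^sub>R v) has_derivative (\<lambda>h. h *\<^sub>R v)) (at s)"
    by (intro derivative_eq_intros) auto
  have d2: "(\<phi> has_derivative ?D) (at ((\<lambda>s. p + s *\<^sub>R v) s))"
    using assms by (simp add: frechet_derivative_works[symmetric])
  have "((\<phi> \<circ> (\<lambda>s. p + s *\<^sub>R v)) has_derivative (?D \<circ> (\<lambda>h. h *\<^sub>R v))) (at s)"
    by (rule diff_chain_at[OF d1 d2])
  moreover have "?D \<circ> (\<lambda>h. h *\<^sub>R v) = (*) (?D v)"
  proof
    fix h
    have "linear ?D" using assms by (rule linear_frechet_derivative)
    then show "(?D \<circ> (\<lambda>h. h *\<^sub>R v)) h = ?D v * h" by (simp add: linear_scale)
  qed
  ultimately show ?thesis by (simp add: has_field_derivative_def o_def)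
qed

lemma smooth_f_diff: "smooth_on W f \<Longrightarrow> y \<in> W \<Longrightarrow> f differentiable (at y)"
  using smooth_diff[of W f y "[]"] by simp

lemma smooth_ddir_diff: "smooth_on W f \<Longrightarrow> y \<in> W \<Longrightarrow> (ddir v f) differentiable (at y)"
  using smooth_diff[of W f y "[v]"] by simp

lemma smooth_dd_cont: "smooth_on W f \<Longrightarrow> y \<in> W \<Longrightarrow> continuous (at y) (ddir w (ddir v f))"
  using smooth_diff[of W f y "[w,v]"] differentiable_imp_continuous_within by simp

lemma line_deriv_ddir:
  assumes "\<phi> differentiable (at (p + s *\<^sub>R v))"
  shows "((\<lambda>s. \<phi> (p + s *\<^sub>R v)) has_real_derivative ddir v \<phi> (p + s *\<^sub>R v)) (at s)"
  using line_deriv[OF assms] by (simp add: ddir_def)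

lemma mvt2d:
  fixes f :: "'a::euclidean_space \<Rightarrow> real"
  assumes sm: "smooth_on W f" and h: "h > 0"
    and inW: "\<And>a b. 0 \<le> a \<Longrightarrow> a \<le> h \<Longrightarrow> 0 \<le> b \<Longrightarrow> b \<le> h \<Longrightarrow> x + a *\<^sub>R v + b *\<^sub>R w \<in> W"
  shows "\<exists>a b. 0 < a \<and> a < h \<and> 0 < b \<and> b < h \<and>
     f (x + h *\<^sub>R v + h *\<^sub>R w) - f (x + h *\<^sub>R v) - f (x + h *\<^sub>R w) + f x
       = h\<^sup>2 * ddir w (ddir v f) (x + a *\<^sub>R v + b *\<^sub>R w)"
proof -
  define \<phi> where "\<phi> s = f ((x + h *\<^sub>R w) + s *\<^sub>R v) - f (x + s *\<^sub>R v)" for s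
  define \<phi>' where "\<phi>' s = ddir v f ((x + h *\<^sub>R w) + s *\<^sub>R v) - ddir v f (x + s *\<^sub>R v)" for s
  have d\<phi>: "DERIV \<phi> s :> \<phi>' s" if "0 \<le> s" "s \<le> h" for s
  proof -
    have i1: "(x + h *\<^sub>R w) + s *\<^sub>R v \<in> W" using inW[of s h] that h by (simp add: algebra_simps)
    have i2: "x + s *\<^sub>R v \<in> W" using inW[of s 0] that h by simp
    have d1: "((\<lambda>s. f ((x + h *\<^sub>R w) + s *\<^sub>R v)) has_real_derivative ddir v f ((x + h *\<^sub>R w) + s *\<^sub>R v)) (at s)"
      by (rule line_deriv_ddir) (rule smooth_f_diff[OF sm i1])
    have d2: "((\<lambda>s. f (x + s *\<^sub>R v)) has_real_derivative ddir v f (x + s *\<^sub>R v)) (at s)"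
      by (rule line_deriv_ddir) (rule smooth_f_diff[OF sm i2])
    show ?thesis unfolding \<phi>_def \<phi>'_def by (rule DERIV_diff[OF d1 d2])
  qed
  obtain a where a: "0 < a" "a < h" "\<phi> h - \<phi> 0 = (h - 0) * \<phi>' a"
    using MVT2[OF h, of \<phi> \<phi>'] d\<phi> by blast
  define \<psi> where "\<psi> b = ddir v f ((x + a *\<^sub>R v) + b *\<^sub>R w)" for b
  define \<psi>' where "\<psi>' b = ddir w (ddir v f) ((x + a *\<^sub>R v) + b *\<^sub>R w)" for b
  have d\<psi>: "DERIV \<psi> b :> \<psi>' b" if "0 \<le> b" "b \<le> h" for b
  proof -
    have i1: "(x + a *\<^sub>R v) + b *\<^sub>R w \<in> W" using inW[of a b] that a by simp
    show ?thesis unfolding \<psi>_def \<psi>'_def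
      by (rule line_deriv_ddir) (rule smooth_ddir_diff[OF sm i1])
  qed
  obtain b where b: "0 < b" "b < h" "\<psi> h - \<psi> 0 = (h - 0) * \<psi>' b"
    using MVT2[OF h, of \<psi> \<psi>'] d\<psi> by blast
  have e1: "\<phi> h - \<phi> 0 = f (x + h *\<^sub>R v + h *\<^sub>R w) - f (x + h *\<^sub>R v) - f (x + h *\<^sub>R w) + f x"
    unfolding \<phi>_def by (simp add: algebra_simps)
  have e2: "\<phi>' a = \<psi> h - \<psi> 0"
    unfolding \<phi>'_def \<psi>_def by (simp add: algebra_simps)
  show ?thesis
    using a b e1 e2 unfolding \<psi>'_def by (intro exI[of _ a] exI[of _ b]) (simp add: power2_eq_square)
qed

lemma smooth_hess_sym:
  fixes f :: "'a::euclidean_space \<Rightarrow> real"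
  assumes sm: "smooth_on W f" and x: "x \<in> W"
  shows "ddir w (ddir v f) x = ddir v (ddir w f) x"
proof (rule ccontr)
  let ?A = "ddir w (ddir v f)" and ?B = "ddir v (ddir w f)"
  assume ne: "?A x \<noteq> ?B x"
  define e where "e = \<bar>?A x - ?B x\<bar> / 2"
  have e: "e > 0" using ne by (simp add: e_def)
  obtain r where r: "r > 0" "ball x r \<subseteq> W"
    using smooth_open[OF sm] x open_contains_ball by blast
  obtain dA where dA: "dA > 0" "\<And>y. dist y x < dA \<Longrightarrow> dist (?A y) (?A x) < e"
    using smooth_dd_cont[OF sm x, of w v] e unfolding continuous_at_eps_delta by blast
  obtain dB where dB: "dB > 0" "\<And>y. dist y x < dB \<Longrightarrow> dist (?B y) (?B x) < e"
    using smooth_dd_cont[OF sm x, of v w] e unfolding continuous_at_eps_delta by blast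
  define \<rho> where "\<rho> = min r (min dA dB)"
  have \<rho>: "\<rho> > 0" using r dA dB by (simp add: \<rho>_def)
  define h where "h = \<rho> / (2 * (norm v + norm w + 1))"
  have den: "2 * (norm v + norm w + 1) > 0" by (intro mult_pos_pos add_nonneg_pos add_nonneg_nonneg) auto
  have h: "h > 0" unfolding h_def using \<rho> den by (rule divide_pos_pos)
  have close: "dist (x + a *\<^sub>R p + b *\<^sub>R q) x < \<rho>"
    if "0 \<le> a" "a \<le> h" "0 \<le> b" "b \<le> h" "p = v \<and> q = w \<or> p = w \<and> q = v" for a b p q
  proof -
    have "dist (x + a *\<^sub>R p + b *\<^sub>R q) x = norm (a *\<^sub>R p + b *\<^sub>R q)" by (simp add: dist_norm)
    also have "\<dots> \<le> a * norm p + b * norm q"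
      using norm_triangle_ineq[of "a *\<^sub>R p" "b *\<^sub>R q"] that by simp
    also have "\<dots> \<le> h * norm p + h * norm q"
      using that by (intro add_mono mult_right_mono) auto
    also have "\<dots> = h * (norm v + norm w)" using that(5) by (auto simp: algebra_simps)
    also have "\<dots> < \<rho>"
    proof -
      have "h * (norm v + norm w) \<le> h * (2 * (norm v + norm w + 1)) / 2" using h by simp
      also have "\<dots> = \<rho> / 2" using den by (simp add: h_def)
      finally show ?thesis using \<rho> by simp
    qed
    finally show ?thesis .
  qed
  have inW: "x + a *\<^sub>R p + b *\<^sub>R q \<in> W"
    if "0 \<le> a" "a \<le> h" "0 \<le> b" "b \<le> h" "p = v \<and> q = w \<or> p = w \<and> q = v" for a b p q
  proof -
    have "dist (x + a *\<^sub>R p + b *\<^sub>R q) x < r" using close[OF that] \<rho>_def by simp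
    then show ?thesis using r by (auto simp: dist_commute)
  qed
  obtain a1 b1 where ab1: "0 < a1" "a1 < h" "0 < b1" "b1 < h"
    "f (x + h *\<^sub>R v + h *\<^sub>R w) - f (x + h *\<^sub>R v) - f (x + h *\<^sub>R w) + f x = h\<^sup>2 * ?A (x + a1 *\<^sub>R v + b1 *\<^sub>R w)"
    using mvt2d[OF sm h, of x v w] inW by blast
  obtain a2 b2 where ab2: "0 < a2" "a2 < h" "0 < b2" "b2 < h"
    "f (x + h *\<^sub>R w + h *\<^sub>R v) - f (x + h *\<^sub>R w) - f (x + h *\<^sub>R v) + f x = h\<^sup>2 * ?B (x + a2 *\<^sub>R w + b2 *\<^sub>R v)"
    using mvt2d[OF sm h, of x w v] inW by blast
  have "f (x + h *\<^sub>R w + h *\<^sub>R v) = f (x + h *\<^sub>R v + h *\<^sub>R w)" by (simp add: add_ac)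
  then have "h\<^sup>2 * ?A (x + a1 *\<^sub>R v + b1 *\<^sub>R w) = h\<^sup>2 * ?B (x + a2 *\<^sub>R w + b2 *\<^sub>R v)"
    using ab1(5) ab2(5) by linarith
  then have eq: "?A (x + a1 *\<^sub>R v + b1 *\<^sub>R w) = ?B (x + a2 *\<^sub>R w + b2 *\<^sub>R v)" using h by simp
  have c1: "dist (?A (x + a1 *\<^sub>R v + b1 *\<^sub>R w)) (?A x) < e"
    using dA(2) close[of a1 b1 v w] ab1 \<rho>_def by auto
  have c2: "dist (?B (x + a2 *\<^sub>R w + b2 *\<^sub>R v)) (?B x) < e"
    using dB(2) close[of a2 b2 w v] ab2 \<rho>_def by auto
  have "\<bar>?A x - ?B x\<bar> < 2 * e" using c1 c2 eq unfolding dist_real_def by linarith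
  then show False unfolding e_def by simp
qed

lemma smooth_extr_grad:
  assumes sm: "smooth_on W f" and x: "x \<in> W" and mx: "(\<forall>y\<in>W. f y \<le> f x) \<or> (\<forall>y\<in>W. f x \<le> f y)"
  shows "frechet_derivative f (at x) = (\<lambda>v. 0)"
  using differential_zero_maxmin[OF x smooth_open[OF sm] _ mx] smooth_f_diff[OF sm x]
  by (simp add: frechet_derivative_works)

lemma small_step:
  fixes x v :: "'a::real_normed_vector"
  assumes r: "r > 0" "ball x r \<subseteq> W" and d: "d > 0"
  obtains h where "h > 0" "h < d" "\<And>s. 0 \<le> s \<Longrightarrow> s \<le> h \<Longrightarrow> x + s *\<^sub>R v \<in> W"
proof -
  define h where "h = min (d / 2) (r / (2 * (norm v + 1)))"
  have den: "2 * (norm v + 1) > 0" by (intro mult_pos_pos add_nonneg_pos add_nonneg_nonneg) auto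
  have "r / (2 * (norm v + 1)) > 0" using r den by (simp add: divide_pos_pos)
  then have h: "h > 0" "h < d" using d by (auto simp: h_def)
  have "x + s *\<^sub>R v \<in> W" if "0 \<le> s" "s \<le> h" for s
  proof -
    have "norm (s *\<^sub>R v) = s * norm v" using that by simp
    also have "\<dots> \<le> h * norm v" using that by (simp add: mult_right_mono)
    also have "\<dots> \<le> (r / (2 * (norm v + 1))) * norm v" by (rule mult_right_mono) (auto simp: h_def)
    also have "\<dots> < r"
    proof -
      have "r * norm v < r * (2 * (norm v + 1))" using r(1) by (intro mult_strict_left_mono) (auto intro: add_nonneg_pos)
      then have "r * norm v / (2 * (norm v + 1)) < r" using den by (simp add: divide_less_eq)
      then show ?thesis by simp
    qed
    finally have "dist (x + s *\<^sub>R v) x < r" by (simp add: dist_norm)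
    then show ?thesis using r by (auto simp: dist_commute)
  qed
  then show ?thesis using that h by blast
qed

lemma smooth_max_hess:
  fixes f :: "'a::euclidean_space \<Rightarrow> real"
  assumes sm: "smooth_on W f" and x: "x \<in> W" and mx: "\<forall>y\<in>W. f y \<le> f x"
  shows "ddir v (ddir v f) x \<le> 0"
proof (rule ccontr)
  assume "\<not> ?thesis" then have pos: "ddir v (ddir v f) x > 0" by simp
  have g0: "ddir v f x = 0" using smooth_extr_grad[OF sm x] mx by (simp add: ddir_def)
  define \<psi> where "\<psi> s = ddir v f (x + s *\<^sub>R v)" for s
  have "DERIV \<psi> 0 :> ddir v (ddir v f) (x + 0 *\<^sub>R v)" unfolding \<psi>_def
    by (rule line_deriv_ddir) (use smooth_ddir_diff[OF sm x] in simp)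
  then have "DERIV \<psi> 0 :> ddir v (ddir v f) x" by simp
  from has_real_derivative_pos_inc_right[OF this pos]
  obtain d where d: "d > 0" "\<And>h. h > 0 \<Longrightarrow> h < d \<Longrightarrow> \<psi> 0 < \<psi> h" by auto
  obtain r where r: "r > 0" "ball x r \<subseteq> W"
    using smooth_open[OF sm] x open_contains_ball by blast
  obtain h where h: "h > 0" "h < d" "\<And>s. 0 \<le> s \<Longrightarrow> s \<le> h \<Longrightarrow> x + s *\<^sub>R v \<in> W"
    using small_step[OF r d] by blast
  define \<phi> where "\<phi> s = f (x + s *\<^sub>R v)" for s
  have "DERIV \<phi> s :> \<psi> s" if "0 \<le> s" "s \<le> h" for s
    unfolding \<phi>_def \<psi>_def by (rule line_deriv_ddir) (rule smooth_f_diff[OF sm h(3)[OF that]])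
  then obtain c where c: "0 < c" "c < h" "\<phi> h - \<phi> 0 = (h - 0) * \<psi> c"
    using MVT2[OF h(1), of \<phi> \<psi>] by blast
  have "\<psi> c > 0" using d(2)[of c] c h g0 \<psi>_def by simp
  then have "h * \<psi> c > 0" using h(1) by (simp add: mult_pos_pos)
  then have "\<phi> h > \<phi> 0" using c by simp
  moreover have "\<phi> h \<le> \<phi> 0" using mx h(3)[of h] h(1) unfolding \<phi>_def by simp
  ultimately show False by simp
qed

lemma smooth_min_hess:
  fixes f :: "'a::euclidean_space \<Rightarrow> real"
  assumes sm: "smooth_on W f" and x: "x \<in> W" and mn: "\<forall>y\<in>W. f x \<le> f y"
  shows "ddir v (ddir v f) x \<ge> 0"
proof (rule ccontr)
  assume "\<not> ?thesis" then have neg: "ddir v (ddir v f) x < 0" by simp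
  have g0: "ddir v f x = 0" using smooth_extr_grad[OF sm x] mn by (simp add: ddir_def)
  define \<psi> where "\<psi> s = ddir v f (x + s *\<^sub>R v)" for s
  have "DERIV \<psi> 0 :> ddir v (ddir v f) (x + 0 *\<^sub>R v)" unfolding \<psi>_def
    by (rule line_deriv_ddir) (use smooth_ddir_diff[OF sm x] in simp)
  then have "DERIV \<psi> 0 :> ddir v (ddir v f) x" by simp
  from has_real_derivative_neg_dec_right[OF this neg]
  obtain d where d: "d > 0" "\<And>h. h > 0 \<Longrightarrow> h < d \<Longrightarrow> \<psi> 0 > \<psi> h" by auto
  obtain r where r: "r > 0" "ball x r \<subseteq> W"
    using smooth_open[OF sm] x open_contains_ball by blast
  obtain h where h: "h > 0" "h < d" "\<And>s. 0 \<le> s \<Longrightarrow> s \<le> h \<Longrightarrow> x + s *\<^sub>R v \<in> W"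
    using small_step[OF r d] by blast
  define \<phi> where "\<phi> s = f (x + s *\<^sub>R v)" for s
  have "DERIV \<phi> s :> \<psi> s" if "0 \<le> s" "s \<le> h" for s
    unfolding \<phi>_def \<psi>_def by (rule line_deriv_ddir) (rule smooth_f_diff[OF sm h(3)[OF that]])
  then obtain c where c: "0 < c" "c < h" "\<phi> h - \<phi> 0 = (h - 0) * \<psi> c"
    using MVT2[OF h(1), of \<phi> \<psi>] by blast
  have "\<psi> c < 0" using d(2)[of c] c h g0 \<psi>_def by simp
  then have "h * \<psi> c < 0" using h(1) by (simp add: mult_pos_neg)
  then have "\<phi> h < \<phi> 0" using c by simp
  moreover have "\<phi> h \<ge> \<phi> 0" using mn h(3)[of h] h(1) unfolding \<phi>_def by simp
  ultimately show False by simp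
qed

lemma ddir_add: "smooth_on W f \<Longrightarrow> y \<in> W \<Longrightarrow> ddir (v1 + v2) f y = ddir v1 f y + ddir v2 f y"
  using linear_frechet_derivative[OF smooth_f_diff, of W f y] unfolding ddir_def by (simp add: linear_add)

lemma ddir_scale: "smooth_on W f \<Longrightarrow> y \<in> W \<Longrightarrow> ddir (c *\<^sub>R v) f y = c * ddir v f y"
  using linear_frechet_derivative[OF smooth_f_diff, of W f y] unfolding ddir_def by (simp add: linear_scale)

lemma dd_lin_left:
  assumes sm: "smooth_on W f" and x: "x \<in> W"
  shows "ddir w (ddir (a *\<^sub>R v1 + b *\<^sub>R v2) f) x = a * ddir w (ddir v1 f) x + b * ddir w (ddir v2 f) x"
proof -
  let ?D1 = "frechet_derivative (ddir v1 f) (at x)" and ?D2 = "frechet_derivative (ddir v2 f) (at x)"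
  have d1: "(ddir v1 f has_derivative ?D1) (at x)"
    using smooth_ddir_diff[OF sm x] by (simp add: frechet_derivative_works[symmetric])
  have d2: "(ddir v2 f has_derivative ?D2) (at x)"
    using smooth_ddir_diff[OF sm x] by (simp add: frechet_derivative_works[symmetric])
  have "((\<lambda>y. a * ddir v1 f y + b * ddir v2 f y) has_derivative (\<lambda>h. a * ?D1 h + b * ?D2 h)) (at x)"
    by (intro has_derivative_add has_derivative_mult_right d1 d2)
  then have "(ddir (a *\<^sub>R v1 + b *\<^sub>R v2) f has_derivative (\<lambda>h. a * ?D1 h + b * ?D2 h)) (at x)"
    by (rule has_derivative_transform_within_open[OF _ smooth_open[OF sm] x])
       (simp add: ddir_add[OF sm] ddir_scale[OF sm])
  then have "frechet_derivative (ddir (a *\<^sub>R v1 + b *\<^sub>R v2) f) (at x) = (\<lambda>h. a * ?D1 h + b * ?D2 h)"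
    by (metis frechet_derivative_at)
  then show ?thesis by (simp add: ddir_def[of w])
qed

lemma hess_bilinear:
  assumes sm: "smooth_on W f" and x: "x \<in> W"
  shows "bilinear (\<lambda>v w. ddir w (ddir v f) x + c * (v \<bullet> w))"
  unfolding bilinear_def
proof (intro conjI allI)
  fix v
  have l: "linear (frechet_derivative (ddir v f) (at x))"
    by (rule linear_frechet_derivative[OF smooth_ddir_diff[OF sm x]])
  show "linear (\<lambda>w. ddir w (ddir v f) x + c * (v \<bullet> w))"
    by (rule linearI) (simp_all add: ddir_def[of _ "ddir v f"] linear_add[OF l] linear_scale[OF l] inner_add_right algebra_simps)
next
  fix w
  show "linear (\<lambda>v. ddir w (ddir v f) x + c * (v \<bullet> w))"
  proof (rule linearI)
    fix v1 v2
    show "ddir w (ddir (v1 + v2) f) x + c * ((v1 + v2) \<bullet> w) =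
          ddir w (ddir v1 f) x + c * (v1 \<bullet> w) + (ddir w (ddir v2 f) x + c * (v2 \<bullet> w))"
      using dd_lin_left[OF sm x, of w 1 v1 1 v2] by (simp add: inner_add_left algebra_simps)
  next
    fix r v
    show "ddir w (ddir (r *\<^sub>R v) f) x + c * ((r *\<^sub>R v) \<bullet> w) = r *\<^sub>R (ddir w (ddir v f) x + c * (v \<bullet> w))"
      using dd_lin_left[OF sm x, of w r v 0 v] by (simp add: algebra_simps)
  qed
qed

lemma hess_sym:
  assumes sm: "smooth_on W f" and x: "x \<in> W"
  shows "ddir w (ddir v f) x + c * (v \<bullet> w) = ddir v (ddir w f) x + c * (w \<bullet> v)"
  using smooth_hess_sym[OF sm x, of w v] by (simp add: inner_commute)

lemma eigs_exist:
  fixes x :: "real^'m" and Q :: "real^'m \<Rightarrow> real^'m \<Rightarrow> real"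
  assumes dim: "CARD('m) = Suc CARD('k)" and x: "x \<noteq> 0"
    and bl: "bilinear Q" and sym: "\<And>v w. Q v w = Q w v"
  shows "\<exists>lam :: real^'k. is_eigs x Q lam"
proof -
  have tan: "tangent x = {v. x \<bullet> v = 0}" unfolding tangent_def by (auto simp: inner_commute)
  have sub: "subspace (tangent x)" unfolding tan by (rule subspace_hyperplane)
  have "dim (tangent x) = CARD('k)" unfolding tan using dim_hyperplane[OF x] dim by simp
  then obtain B where B: "B \<subseteq> tangent x" "finite B" "card B = CARD('k)" "\<forall>b\<in>B. norm b = 1"
      "\<forall>b\<in>B. \<forall>c\<in>B. b \<noteq> c \<longrightarrow> b \<bullet> c = 0 \<and> Q b c = 0"
    using spectral_aux[OF bl sym sub, of "CARD('k)"] by auto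
  obtain e where e: "bij_betw e (UNIV :: 'k set) B"
    using finite_same_card_bij[of "UNIV :: 'k set" B] B by auto
  have eB: "e i \<in> B" for i using e by (auto simp: bij_betw_def)
  have einj: "e i = e j \<Longrightarrow> i = j" for i j using e by (auto simp: bij_betw_def inj_def)
  define lam :: "real^'k" where "lam = (\<chi> i. Q (e i) (e i))"
  have "is_eigs x Q lam" unfolding is_eigs_def
  proof (intro exI[of _ e] conjI allI)
    fix i j
    show "e i \<in> tangent x" using eB B(1) by auto
    show "e i \<bullet> e j = (if i = j then 1 else 0)"
    proof (cases "i = j")
      case True then show ?thesis using B(4) eB[of i] by (simp add: dot_square_norm)
    next
      case False then have "e i \<noteq> e j" using einj by blast
      then show ?thesis using B(5) eB False by auto
    qed
    show "Q (e i) (e j) = (if i = j then lam $ i else 0)"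
    proof (cases "i = j")
      case True then show ?thesis by (simp add: lam_def)
    next
      case False then have "e i \<noteq> e j" using einj by blast
      then show ?thesis using B(5) eB False by auto
    qed
  qed
  then show ?thesis by blast
qed

lemma F_one:
  fixes F :: "real^'k \<Rightarrow> real"
  assumes adm: "admissible_F \<beta> F" and beta: "\<beta> > 0"
  shows "F (\<chi> i. 1) = 1"
proof -
  have g: "(\<chi> i. 1) \<in> (Gamma_plus :: (real^'k) set)" by (simp add: Gamma_plus_def)
  have pos: "F (\<chi> i. 1) > 0" using adm g unfolding admissible_F_def by blast
  have p: "F (\<chi> i. 1) powr \<beta> = 1" using adm by (simp add: admissible_F_def)
  have "F (\<chi> i. 1) = (F (\<chi> i. 1) powr \<beta>) powr (1 / \<beta>)" using pos beta by (simp add: powr_powr)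
  also have "\<dots> = 1" using p by simp
  finally show ?thesis .
qed

lemma F_const:
  fixes F :: "real^'k \<Rightarrow> real"
  assumes adm: "admissible_F \<beta> F" and beta: "\<beta> > 0" and c: "c > 0"
  shows "F (c *\<^sub>R (\<chi> i. 1)) = c"
proof -
  have g: "(\<chi> i. 1) \<in> (Gamma_plus :: (real^'k) set)" by (simp add: Gamma_plus_def)
  then have "F (c *\<^sub>R (\<chi> i. 1)) = c * F (\<chi> i. 1)" using adm c by (simp add: admissible_F_def)
  then show ?thesis using F_one[OF adm beta] by simp
qed

lemma F_mono:
  fixes F :: "real^'k \<Rightarrow> real"
  assumes adm: "admissible_F \<beta> F" and lam: "lam \<in> Gamma_plus" and mu: "mu \<in> Gamma_plus"
    and le: "\<And>i. lam $ i \<le> mu $ i"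
  shows "F lam \<le> F mu"
proof -
  define d where "d = mu - lam"
  define p where "p s = lam + s *\<^sub>R d" for s
  have pG: "p s \<in> Gamma_plus" if "0 \<le> s" "s \<le> 1" for s
  proof -
    have "p s $ i > 0" for i
    proof -
      have "p s $ i = (1 - s) * lam $ i + s * mu $ i" by (simp add: p_def d_def algebra_simps)
      moreover have "(1 - s) * lam $ i \<ge> 0" using that lam by (simp add: Gamma_plus_def less_imp_le)
      moreover have "s * mu $ i \<ge> 0" using that mu by (simp add: Gamma_plus_def less_imp_le)
      moreover have "(1 - s) * lam $ i > 0 \<or> s * mu $ i > 0"
        using that lam mu by (cases "s = 1") (auto simp: Gamma_plus_def)
      ultimately show ?thesis by linarith
    qed
    then show ?thesis by (simp add: Gamma_plus_def)
  qed
  have der: "DERIV (\<lambda>s. F (p s)) s :> frechet_derivative F (at (p s)) d" if "0 \<le> s" "s \<le> 1" for s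
  proof -
    have "F differentiable (at (lam + s *\<^sub>R d))" using adm pG[OF that] by (simp add: admissible_F_def p_def)
    from line_deriv[OF this] show ?thesis by (simp add: p_def)
  qed
  have nn: "frechet_derivative F (at (p s)) d \<ge> 0" if "0 \<le> s" "s \<le> 1" for s
  proof -
    have dF: "F differentiable (at (p s))" and pos: "\<forall>i. frechet_derivative F (at (p s)) (axis i 1) > 0"
      using adm pG[OF that] by (auto simp: admissible_F_def)
    have l: "linear (frechet_derivative F (at (p s)))" by (rule linear_frechet_derivative[OF dF])
    have "d = (\<Sum>i\<in>UNIV. (d $ i) *\<^sub>R axis i 1)"
      using basis_expansion[of d] by (simp add: scalar_mult_eq_scaleR)
    then have "frechet_derivative F (at (p s)) d = frechet_derivative F (at (p s)) (\<Sum>i\<in>UNIV. (d $ i) *\<^sub>R axis i 1)"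
      by simp
    also have "\<dots> = (\<Sum>i\<in>UNIV. frechet_derivative F (at (p s)) ((d $ i) *\<^sub>R axis i 1))"
      by (rule linear_sum[OF l])
    also have "\<dots> = (\<Sum>i\<in>UNIV. (d $ i) * frechet_derivative F (at (p s)) (axis i 1))"
      by (simp add: linear_scale[OF l])
    also have "\<dots> \<ge> 0"
      using pos le by (intro sum_nonneg mult_nonneg_nonneg) (auto simp: d_def less_imp_le)
    finally show ?thesis .
  qed
  have "F (p 0) \<le> F (p 1)"
    by (rule DERIV_nonneg_imp_nondecreasing[of 0 1]) (use der nn in auto)
  then show ?thesis by (simp add: p_def d_def)
qed

lemma sph_ext_sphere: "norm x = 1 \<Longrightarrow> sph_ext u t x = u x t"
  by (simp add: sph_ext_def)

lemma open_nonzero: "open {y :: 'a::real_normed_vector. y \<noteq> 0}"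
proof -
  have "{y :: 'a. y \<noteq> 0} = - {0}" by auto
  then show ?thesis by (simp add: open_Compl)
qed

lemma flow_smooth:
  assumes "flow_solution G \<beta> F u T"
  obtains U g where "smooth_on U g"
    "\<And>y t. y \<noteq> 0 \<Longrightarrow> 0 \<le> t \<Longrightarrow> ereal t < T \<Longrightarrow> (y, t) \<in> U \<and> g (y, t) = sph_ext u t y"
proof -
  let ?A = "{(y, t). y \<noteq> 0 \<and> 0 \<le> t \<and> ereal t < T}"
  obtain U g where U: "?A \<subseteq> U" "smooth_on U g" "\<forall>p\<in>?A. g p = (\<lambda>(y, t). sph_ext u t y) p"
    using assms unfolding flow_solution_def smooth_on_set_def by blast
  have "(y, t) \<in> U \<and> g (y, t) = sph_ext u t y" if "y \<noteq> 0" "0 \<le> t" "ereal t < T" for y t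
  proof -
    have "(y, t) \<in> ?A" using that by simp
    then show ?thesis using U by auto
  qed
  then show ?thesis using that U(2) by blast
qed

lemma ext_smooth:
  assumes fl: "flow_solution G \<beta> F u T" and t: "0 \<le> t" "ereal t < T"
  shows "smooth_on {y. y \<noteq> 0} (sph_ext u t)"
proof -
  obtain U g where sm: "smooth_on U g" and eq:
    "\<And>y t. y \<noteq> 0 \<Longrightarrow> 0 \<le> t \<Longrightarrow> ereal t < T \<Longrightarrow> (y, t) \<in> U \<and> g (y, t) = sph_ext u t y"
    using flow_smooth[OF fl] by blast
  show ?thesis
    by (rule smooth_local[OF smooth_slice[OF sm, of t] open_nonzero]) (use eq t in auto)
qed

lemma u_cont:
  fixes u :: "real^'m \<Rightarrow> real \<Rightarrow> real"
  assumes fl: "flow_solution G \<beta> F u T" and t1: "ereal t1 < T"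
  shows "continuous_on (sphere 0 1 \<times> {0..t1}) (\<lambda>p. u (fst p) (snd p))"
proof -
  obtain U g where sm: "smooth_on U g" and eq:
    "\<And>y t. y \<noteq> 0 \<Longrightarrow> 0 \<le> t \<Longrightarrow> ereal t < T \<Longrightarrow> (y, t) \<in> U \<and> g (y, t) = sph_ext u t y"
    using flow_smooth[OF fl] by blast
  have "continuous_on U g"
    using smooth_open[OF sm] smooth_f_diff[OF sm]
    by (simp add: continuous_on_eq_continuous_at differentiable_imp_continuous_within)
  moreover have sub: "sphere 0 1 \<times> {0..t1} \<subseteq> U"
  proof
    fix p :: "(real^'m) \<times> real" assume "p \<in> sphere 0 1 \<times> {0..t1}"
    then obtain y t where p: "p = (y, t)" "norm y = 1" "0 \<le> t" "t \<le> t1" by auto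
    have "ereal t < T" using p(4) t1 by (meson ereal_less_eq(3) le_less_trans)
    moreover have "y \<noteq> 0" using p(2) by auto
    ultimately show "p \<in> U" using eq[of y t] p by auto
  qed
  ultimately have "continuous_on (sphere 0 1 \<times> {0..t1}) g" by (rule continuous_on_subset)
  then show ?thesis
  proof (rule continuous_on_eq)
    fix p :: "(real^'m) \<times> real" assume "p \<in> sphere 0 1 \<times> {0..t1}"
    then obtain y t where p: "p = (y, t)" "norm y = 1" "0 \<le> t" "t \<le> t1" by auto
    have "ereal t < T" using p(4) t1 by (meson ereal_less_eq(3) le_less_trans)
    moreover have "y \<noteq> 0" using p(2) by auto
    ultimately show "g p = u (fst p) (snd p)" using eq[of y t] p sph_ext_sphere[of y u t] by auto
  qed
qed

lemma G_bdd_above: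
  fixes G :: "real^'m \<Rightarrow> real^'m \<Rightarrow> real"
  assumes G_smooth: "smooth_on_set {(x, X). x \<in> sphere 0 1 \<and> x \<bullet> X > 0} (\<lambda>(x, X). G x X)"
    and s: "s > 0"
  shows "bdd_above ((\<lambda>x. G x (s *\<^sub>R x)) ` sphere 0 1)"
proof -
  obtain U g where sub: "{(x, X). x \<in> sphere 0 1 \<and> x \<bullet> X > 0} \<subseteq> U" and sm: "smooth_on U g"
    and eq: "\<forall>p\<in>{(x, X). x \<in> sphere 0 1 \<and> x \<bullet> X > 0}. g p = (\<lambda>(x, X). G x X) p"
    using G_smooth unfolding smooth_on_set_def by blast
  have cg: "continuous_on U g"
    using smooth_open[OF sm] smooth_f_diff[OF sm]
    by (simp add: continuous_on_eq_continuous_at differentiable_imp_continuous_within)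
  have inB: "(x, s *\<^sub>R x) \<in> {(x, X). x \<in> sphere 0 1 \<and> x \<bullet> X > 0}" if "x \<in> sphere 0 1" for x
    using that s by (simp add: dot_square_norm)
  have "continuous_on (sphere 0 1) (\<lambda>x. g (x, s *\<^sub>R x))"
  proof (rule continuous_on_compose2[OF cg])
    show "continuous_on (sphere 0 1) (\<lambda>x::real^'m. (x, s *\<^sub>R x))"
      by (intro continuous_on_Pair continuous_on_id) (rule linear_continuous_on[OF bounded_linear_scaleR_right])
    show "(\<lambda>x::real^'m. (x, s *\<^sub>R x)) ` sphere 0 1 \<subseteq> U" using inB sub by blast
  qed
  then have c: "continuous_on (sphere 0 1) (\<lambda>x. G x (s *\<^sub>R x))"
  proof (rule continuous_on_eq)
    fix x :: "real^'m" assume "x \<in> sphere 0 1"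
    then have "(x, s *\<^sub>R x) \<in> {(x, X). x \<in> sphere 0 1 \<and> x \<bullet> X > 0}" by (rule inB)
    then show "g (x, s *\<^sub>R x) = G x (s *\<^sub>R x)" using eq by auto
  qed
  have "compact ((\<lambda>x. G x (s *\<^sub>R x)) ` sphere 0 1)"
    by (rule compact_continuous_image[OF c compact_sphere])
  then show ?thesis by (intro bounded_imp_bdd_above compact_imp_bounded)
qed

lemma time_max:
  fixes \<phi> :: "real \<Rightarrow> real"
  assumes d: "(\<phi> has_real_derivative D) (at t0 within {s. 0 \<le> s \<and> ereal s < T})"
    and t0: "0 < t0" "ereal t0 < T" and mx: "\<And>s. 0 \<le> s \<Longrightarrow> s \<le> t0 \<Longrightarrow> \<phi> s \<le> \<phi> t0"
  shows "D \<ge> 0"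
proof (rule ccontr)
  assume "\<not> D \<ge> 0" then have "D < 0" by simp
  from has_real_derivative_neg_dec_left[OF d this]
  obtain e where e: "e > 0" "\<And>h. h > 0 \<Longrightarrow> t0 - h \<in> {s. 0 \<le> s \<and> ereal s < T} \<Longrightarrow> h < e \<Longrightarrow> \<phi> t0 < \<phi> (t0 - h)"
    by blast
  define h where "h = min (e / 2) t0"
  have h: "h > 0" "h < e" "h \<le> t0" using e t0 by (auto simp: h_def)
  have "ereal (t0 - h) < T" using t0(2) h by (meson diff_le_eq ereal_less_eq(3) le_add_same_cancel1 less_imp_le le_less_trans)
  then have "\<phi> t0 < \<phi> (t0 - h)" using e(2)[of h] h by auto
  moreover have "\<phi> (t0 - h) \<le> \<phi> t0" using mx[of "t0 - h"] h by auto
  ultimately show False by simp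
qed

lemma time_min:
  fixes \<phi> :: "real \<Rightarrow> real"
  assumes d: "(\<phi> has_real_derivative D) (at t0 within {s. 0 \<le> s \<and> ereal s < T})"
    and t0: "0 < t0" "ereal t0 < T" and mn: "\<And>s. 0 \<le> s \<Longrightarrow> s \<le> t0 \<Longrightarrow> \<phi> t0 \<le> \<phi> s"
  shows "D \<le> 0"
proof (rule ccontr)
  assume "\<not> D \<le> 0" then have "D > 0" by simp
  from has_real_derivative_pos_inc_left[OF d this]
  obtain e where e: "e > 0" "\<And>h. h > 0 \<Longrightarrow> t0 - h \<in> {s. 0 \<le> s \<and> ereal s < T} \<Longrightarrow> h < e \<Longrightarrow> \<phi> (t0 - h) < \<phi> t0"
    by blast
  define h where "h = min (e / 2) t0"
  have h: "h > 0" "h < e" "h \<le> t0" using e t0 by (auto simp: h_def)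
  have "ereal (t0 - h) < T" using t0(2) h by (meson diff_le_eq ereal_less_eq(3) le_add_same_cancel1 less_imp_le le_less_trans)
  then have "\<phi> (t0 - h) < \<phi> t0" using e(2)[of h] h by auto
  moreover have "\<phi> t0 \<le> \<phi> (t0 - h)" using mn[of "t0 - h"] h by auto
  ultimately show False by simp
qed

lemma Fop_eigs:
  fixes F :: "real^'k \<Rightarrow> real" and x :: "real^'m"
  assumes dim: "CARD('m) = Suc CARD('k)" and x: "x \<noteq> 0" and bl: "bilinear Q"
    and sym: "\<And>v w. Q v w = Q w v" and pd: "posdef_on_tangent x Q"
  shows "\<exists>lam e. Fop F x Q = F lam \<and> lam \<in> Gamma_plus \<and>
           (\<forall>i. e i \<in> tangent x \<and> e i \<bullet> e i = 1 \<and> lam $ i = Q (e i) (e i))"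
proof -
  define lam :: "real^'k" where "lam = (SOME lam. is_eigs x Q lam)"
  have "is_eigs x Q lam" unfolding lam_def by (rule someI_ex[OF eigs_exist[OF dim x bl sym]])
  then obtain e :: "'k \<Rightarrow> real^'m" where e: "\<forall>i. e i \<in> tangent x" "\<forall>i j. e i \<bullet> e j = (if i = j then 1 else 0)"
    "\<forall>i j. Q (e i) (e j) = (if i = j then lam $ i else 0)"
    unfolding is_eigs_def by blast
  have li: "lam $ i = Q (e i) (e i)" for i using e(3) by simp
  have ei: "e i \<bullet> e i = 1" for i using e(2) by simp
  have "lam $ i > 0" for i
  proof -
    have "e i \<noteq> 0" using ei[of i] by auto
    then show ?thesis using pd e(1) li[of i] unfolding posdef_on_tangent_def by auto
  qed
  then have "lam \<in> Gamma_plus" by (simp add: Gamma_plus_def)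
  moreover have "Fop F x Q = F lam" by (simp add: Fop_def lam_def)
  ultimately show ?thesis using e(1) ei li by blast
qed

lemma extremal_point:
  fixes G :: "real^'m \<Rightarrow> real^'m \<Rightarrow> real" and F :: "real^'k \<Rightarrow> real"
  assumes fl: "flow_solution G \<beta> F u T" and adm: "admissible_F \<beta> F" and beta: "\<beta> > 0"
    and dim: "CARD('m) = Suc CARD('k)"
    and x0: "x0 \<in> sphere 0 1" and t0: "0 < t0" "ereal t0 < T"
    and ext: "((\<forall>y\<in>sphere 0 1. u y t0 \<le> u x0 t0) \<and> (\<forall>s. 0 \<le> s \<and> s \<le> t0 \<longrightarrow> u x0 s \<le> u x0 t0)) \<or>
              ((\<forall>y\<in>sphere 0 1. u x0 t0 \<le> u y t0) \<and> (\<forall>s. 0 \<le> s \<and> s \<le> t0 \<longrightarrow> u x0 t0 \<le> u x0 s))"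
  shows "\<exists>lam. u x0 t0 > 0 \<and> lam > 0 \<and>
     ((\<lambda>s. u x0 s) has_real_derivative ((G x0 (u x0 t0 *\<^sub>R x0) * lam powr \<beta> - 1) * u x0 t0))
        (at t0 within {s. 0 \<le> s \<and> ereal s < T}) \<and>
     ((\<forall>y\<in>sphere 0 1. u y t0 \<le> u x0 t0) \<longrightarrow> lam \<le> u x0 t0) \<and>
     ((\<forall>y\<in>sphere 0 1. u x0 t0 \<le> u y t0) \<longrightarrow> lam \<ge> u x0 t0)"
proof -
  define s where "s = u x0 t0"
  have fl_at: "u x0 t0 > 0 \<and> posdef_on_tangent x0 (Wform u t0 x0) \<and>
     ((\<lambda>s. u x0 s) has_real_derivative ((G x0 (u x0 t0 *\<^sub>R x0 + sph_grad u t0 x0) * (Fop F x0 (Wform u t0 x0)) powr \<beta> - 1) * u x0 t0))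
        (at t0 within {s. 0 \<le> s \<and> ereal s < T})"
    using fl x0 t0 unfolding flow_solution_def by auto
  define f where "f = sph_ext u t0"
  define W where "W = {y::real^'m. y \<noteq> 0}"
  have sm: "smooth_on W f" unfolding f_def W_def using ext_smooth[OF fl] t0 by simp
  have nx0: "norm x0 = 1" using x0 by simp
  have x0W: "x0 \<in> W" using nx0 W_def by auto
  have fx0: "f x0 = s" unfolding f_def s_def using sph_ext_sphere[OF nx0] .
  have fy: "f y = u ((1 / norm y) *\<^sub>R y) t0" and sy: "(1 / norm y) *\<^sub>R y \<in> sphere 0 1" if "y \<in> W" for y
    using that by (auto simp: f_def sph_ext_def W_def)
  have fmax: "\<forall>y\<in>W. f y \<le> f x0" if "\<forall>y\<in>sphere 0 1. u y t0 \<le> u x0 t0"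
    using that fy sy fx0 s_def by auto
  have fmin: "\<forall>y\<in>W. f x0 \<le> f y" if "\<forall>y\<in>sphere 0 1. u x0 t0 \<le> u y t0"
    using that fy sy fx0 s_def by auto
  have fext: "(\<forall>y\<in>W. f y \<le> f x0) \<or> (\<forall>y\<in>W. f x0 \<le> f y)" using ext fmax fmin by blast
  have grad: "sph_grad u t0 x0 = 0"
  proof -
    have "frechet_derivative f (at x0) = (\<lambda>v. 0)" by (rule smooth_extr_grad[OF sm x0W fext])
    then show ?thesis unfolding sph_grad_def f_def by (simp add: vec_eq_iff)
  qed
  have Qeq: "Wform u t0 x0 = (\<lambda>v w. ddir w (ddir v f) x0 + s * (v \<bullet> w))"
    by (simp add: fun_eq_iff Wform_def sph_hess_def ddir_def f_def s_def)
  have bl: "bilinear (Wform u t0 x0)" unfolding Qeq by (rule hess_bilinear[OF sm x0W])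
  have sym: "\<And>v w. Wform u t0 x0 v w = Wform u t0 x0 w v" unfolding Qeq by (rule hess_sym[OF sm x0W])
  have pd: "posdef_on_tangent x0 (Wform u t0 x0)" using fl_at by blast
  have x0nz: "x0 \<noteq> 0" using x0W W_def by auto
  obtain lam e where le: "Fop F x0 (Wform u t0 x0) = F lam" "lam \<in> Gamma_plus"
      "\<And>i. e i \<in> tangent x0 \<and> e i \<bullet> e i = 1 \<and> lam $ i = Wform u t0 x0 (e i) (e i)"
    using Fop_eigs[OF dim x0nz bl sym pd, of F] by blast
  have spos: "s > 0" using fl_at s_def by simp
  have c1: "(s *\<^sub>R (\<chi> i. 1 :: real^'k)) \<in> Gamma_plus" using spos by (simp add: Gamma_plus_def)
  have Fc: "F (s *\<^sub>R (\<chi> i. 1 :: real^'k)) = s" by (rule F_const[OF adm beta spos])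
  have Fpos: "F lam > 0" using adm le(2) unfolding admissible_F_def by blast
  have lamup: "F lam \<le> s" if mx: "\<forall>y\<in>sphere 0 1. u y t0 \<le> u x0 t0"
  proof -
    have "lam $ i \<le> s" for i
    proof -
      have "ddir (e i) (ddir (e i) f) x0 \<le> 0" by (rule smooth_max_hess[OF sm x0W fmax[OF mx]])
      then show ?thesis using le(3)[of i] Qeq by simp
    qed
    then have "F lam \<le> F (s *\<^sub>R (\<chi> i. 1))" by (intro F_mono[OF adm le(2) c1]) simp
    then show ?thesis using Fc by simp
  qed
  have lamlo: "F lam \<ge> s" if mn: "\<forall>y\<in>sphere 0 1. u x0 t0 \<le> u y t0"
  proof -
    have "lam $ i \<ge> s" for i
    proof -
      have "ddir (e i) (ddir (e i) f) x0 \<ge> 0" by (rule smooth_min_hess[OF sm x0W fmin[OF mn]])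
      then show ?thesis using le(3)[of i] Qeq by simp
    qed
    then have "F (s *\<^sub>R (\<chi> i. 1)) \<le> F lam" by (intro F_mono[OF adm c1 le(2)]) simp
    then show ?thesis using Fc by simp
  qed
  show ?thesis
    using fl_at grad le(1) Fpos lamup lamlo s_def by (intro exI[of _ "F lam"]) auto
qed

lemma upper_bound:
  fixes G :: "real^'m \<Rightarrow> real^'m \<Rightarrow> real" and F :: "real^'k \<Rightarrow> real"
  assumes dim: "CARD('m) = Suc CARD('k)" and beta: "\<beta> > 0"
    and G_smooth: "smooth_on_set {(x, X). x \<in> sphere 0 1 \<and> x \<bullet> X > 0} (\<lambda>(x, X). G x X)"
    and G_pos: "\<forall>x\<in>sphere 0 1. \<forall>X. x \<bullet> X > 0 \<longrightarrow> G x X > 0"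
    and N: "\<And>s. s \<ge> N \<Longrightarrow> ereal ((SUP x\<in>sphere 0 1. G x (s *\<^sub>R x)) * s powr \<beta>) < 1"
    and adm: "admissible_F \<beta> F" and fl: "flow_solution G \<beta> F u T"
    and M: "(SUP x\<in>sphere 0 1. u x 0) = M"
    and x: "x \<in> sphere 0 1" and t: "0 \<le> t" "ereal t < T"
  shows "u x t \<le> max M (max N 1)"
proof -
  let ?K = "sphere (0::real^'m) 1 \<times> {0..t}"
  have Kc: "compact ?K" by (intro compact_Times compact_sphere compact_Icc)
  have Kne: "?K \<noteq> {}" using x t by auto
  obtain p0 where p0: "p0 \<in> ?K" and mx: "\<And>p. p \<in> ?K \<Longrightarrow> u (fst p) (snd p) \<le> u (fst p0) (snd p0)"
    using continuous_attains_sup[OF Kc Kne u_cont[OF fl t(2)]] by blast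
  obtain x0 t0 where p0e: "p0 = (x0, t0)" by (cases p0)
  have x0: "x0 \<in> sphere 0 1" and t0: "0 \<le> t0" "t0 \<le> t" using p0 p0e by auto
  have t0T: "ereal t0 < T" using t0(2) t(2) by (meson ereal_less_eq(3) le_less_trans)
  have uxt: "u x t \<le> u x0 t0" using mx[of "(x, t)"] x t p0e by auto
  show ?thesis
  proof (cases "t0 = 0")
    case True
    have sp: "\<forall>y\<in>sphere 0 1. u y 0 \<le> u x0 0" using mx True p0e t by auto
    have "(SUP y\<in>sphere 0 1. u y 0) = u x0 0"
    proof (rule antisym)
      show "(SUP y\<in>sphere 0 1. u y 0) \<le> u x0 0" using sp x0 by (intro cSUP_least) auto
      show "u x0 0 \<le> (SUP y\<in>sphere 0 1. u y 0)" using sp x0 by (intro cSUP_upper) (auto intro: bdd_aboveI2)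
    qed
    then show ?thesis using uxt True M by simp
  next
    case False
    then have t0p: "t0 > 0" using t0 by simp
    have spmax: "\<forall>y\<in>sphere 0 1. u y t0 \<le> u x0 t0" using mx t0 p0e by auto
    have tmax: "\<forall>s. 0 \<le> s \<and> s \<le> t0 \<longrightarrow> u x0 s \<le> u x0 t0" using mx x0 t0 p0e by auto
    obtain lam where L: "u x0 t0 > 0" "lam > 0"
      "((\<lambda>s. u x0 s) has_real_derivative ((G x0 (u x0 t0 *\<^sub>R x0) * lam powr \<beta> - 1) * u x0 t0))
        (at t0 within {s. 0 \<le> s \<and> ereal s < T})" "lam \<le> u x0 t0"
      using extremal_point[OF fl adm beta dim x0 t0p t0T] spmax tmax by blast
    define s where "s = u x0 t0"
    have "(G x0 (s *\<^sub>R x0) * lam powr \<beta> - 1) * s \<ge> 0"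
      using time_max[OF L(3) t0p t0T] tmax s_def by auto
    then have g1: "G x0 (s *\<^sub>R x0) * lam powr \<beta> \<ge> 1" using L(1) s_def by (simp add: zero_le_mult_iff)
    have Gp: "G x0 (s *\<^sub>R x0) > 0" using G_pos x0 L(1) s_def by (simp add: dot_square_norm)
    have "lam powr \<beta> \<le> s powr \<beta>" using L(2,4) beta s_def by (intro powr_mono2) auto
    then have "G x0 (s *\<^sub>R x0) * lam powr \<beta> \<le> G x0 (s *\<^sub>R x0) * s powr \<beta>" using Gp by simp
    then have g2: "G x0 (s *\<^sub>R x0) * s powr \<beta> \<ge> 1" using g1 by linarith
    have "s < max N 1"
    proof (rule ccontr)
      assume "\<not> s < max N 1"
      then have sN: "s \<ge> N" "s \<ge> 1" by auto
      have "(SUP x\<in>sphere 0 1. G x (s *\<^sub>R x)) * s powr \<beta> < 1" using N[OF sN(1)] by simp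
      moreover have "G x0 (s *\<^sub>R x0) \<le> (SUP x\<in>sphere 0 1. G x (s *\<^sub>R x))"
        using G_bdd_above[OF G_smooth, of s] sN x0 by (intro cSUP_upper) auto
      then have "G x0 (s *\<^sub>R x0) * s powr \<beta> \<le> (SUP x\<in>sphere 0 1. G x (s *\<^sub>R x)) * s powr \<beta>"
        by (simp add: mult_right_mono)
      ultimately show False using g2 by linarith
    qed
    then show ?thesis using uxt s_def by simp
  qed
qed

lemma lower_bound:
  fixes G :: "real^'m \<Rightarrow> real^'m \<Rightarrow> real" and F :: "real^'k \<Rightarrow> real"
  assumes dim: "CARD('m) = Suc CARD('k)" and beta: "\<beta> > 0"
    and G_pos: "\<forall>x\<in>sphere 0 1. \<forall>X. x \<bullet> X > 0 \<longrightarrow> G x X > 0"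
    and D: "\<And>s. 0 < s \<Longrightarrow> s < \<delta> \<Longrightarrow> 1 < ereal ((INF x\<in>sphere 0 1. G x (s *\<^sub>R x)) * s powr \<beta>)"
    and adm: "admissible_F \<beta> F" and fl: "flow_solution G \<beta> F u T"
    and m: "(INF x\<in>sphere 0 1. u x 0) = m"
    and x: "x \<in> sphere 0 1" and t: "0 \<le> t" "ereal t < T"
  shows "u x t \<ge> \<delta> \<or> (m > 0 \<and> u x t \<ge> m)"
proof -
  let ?K = "sphere (0::real^'m) 1 \<times> {0..t}"
  have Kc: "compact ?K" by (intro compact_Times compact_sphere compact_Icc)
  have Kne: "?K \<noteq> {}" using x t by auto
  obtain p0 where p0: "p0 \<in> ?K" and mn: "\<And>p. p \<in> ?K \<Longrightarrow> u (fst p0) (snd p0) \<le> u (fst p) (snd p)"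
    using continuous_attains_inf[OF Kc Kne u_cont[OF fl t(2)]] by blast
  obtain x0 t0 where p0e: "p0 = (x0, t0)" by (cases p0)
  have x0: "x0 \<in> sphere 0 1" and t0: "0 \<le> t0" "t0 \<le> t" using p0 p0e by auto
  have t0T: "ereal t0 < T" using t0(2) t(2) by (meson ereal_less_eq(3) le_less_trans)
  have uxt: "u x0 t0 \<le> u x t" using mn[of "(x, t)"] x t p0e by auto
  show ?thesis
  proof (cases "t0 = 0")
    case True
    have sp: "\<forall>y\<in>sphere 0 1. u x0 0 \<le> u y 0" using mn True p0e t by auto
    have "(INF y\<in>sphere 0 1. u y 0) = u x0 0"
    proof (rule antisym)
      show "u x0 0 \<le> (INF y\<in>sphere 0 1. u y 0)" using sp x0 by (intro cINF_greatest) auto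
      show "(INF y\<in>sphere 0 1. u y 0) \<le> u x0 0" using sp x0 by (intro cINF_lower) (auto intro: bdd_belowI2)
    qed
    moreover have "u x0 0 > 0"
    proof -
      have "ereal 0 < T" using fl by (simp add: flow_solution_def zero_ereal_def)
      then show ?thesis using fl x0 unfolding flow_solution_def by auto
    qed
    ultimately show ?thesis using uxt True m by simp
  next
    case False
    then have t0p: "t0 > 0" using t0 by simp
    have spmin: "\<forall>y\<in>sphere 0 1. u x0 t0 \<le> u y t0" using mn t0 p0e by auto
    have tmin: "\<forall>s. 0 \<le> s \<and> s \<le> t0 \<longrightarrow> u x0 t0 \<le> u x0 s" using mn x0 t0 p0e by auto
    obtain lam where L: "u x0 t0 > 0" "lam > 0"
      "((\<lambda>s. u x0 s) has_real_derivative ((G x0 (u x0 t0 *\<^sub>R x0) * lam powr \<beta> - 1) * u x0 t0))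
        (at t0 within {s. 0 \<le> s \<and> ereal s < T})" "lam \<ge> u x0 t0"
      using extremal_point[OF fl adm beta dim x0 t0p t0T] spmin tmin by blast
    define s where "s = u x0 t0"
    have "(G x0 (s *\<^sub>R x0) * lam powr \<beta> - 1) * s \<le> 0"
      using time_min[OF L(3) t0p t0T] tmin s_def by auto
    then have g1: "G x0 (s *\<^sub>R x0) * lam powr \<beta> \<le> 1" using L(1) s_def by (simp add: mult_le_0_iff)
    have Gp: "G x0 (s *\<^sub>R x0) > 0" using G_pos x0 L(1) s_def by (simp add: dot_square_norm)
    have "s powr \<beta> \<le> lam powr \<beta>" using L(1,4) beta s_def by (intro powr_mono2) auto
    then have "G x0 (s *\<^sub>R x0) * s powr \<beta> \<le> G x0 (s *\<^sub>R x0) * lam powr \<beta>" using Gp by simp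
    then have g2: "G x0 (s *\<^sub>R x0) * s powr \<beta> \<le> 1" using g1 by linarith
    have "s \<ge> \<delta>"
    proof (rule ccontr)
      assume "\<not> s \<ge> \<delta>"
      then have "1 < ereal ((INF x\<in>sphere 0 1. G x (s *\<^sub>R x)) * s powr \<beta>)" using D L(1) s_def by simp
      then have "1 < (INF x\<in>sphere 0 1. G x (s *\<^sub>R x)) * s powr \<beta>" by simp
      moreover have "(INF x\<in>sphere 0 1. G x (s *\<^sub>R x)) \<le> G x0 (s *\<^sub>R x0)"
      proof (rule cINF_lower[OF _ x0])
        show "bdd_below ((\<lambda>x. G x (s *\<^sub>R x)) ` sphere 0 1)"
        proof (rule bdd_belowI2)
          fix y :: "real^'m" assume "y \<in> sphere 0 1"
          then show "0 \<le> G y (s *\<^sub>R y)" using G_pos L(1) s_def by (auto simp: dot_square_norm less_imp_le)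
        qed
      qed
      then have "(INF x\<in>sphere 0 1. G x (s *\<^sub>R x)) * s powr \<beta> \<le> G x0 (s *\<^sub>R x0) * s powr \<beta>"
        by (simp add: mult_right_mono)
      ultimately show False using g2 by linarith
    qed
    then show ?thesis using uxt s_def by simp
  qed
qed

theorem lemma4p1:
  fixes G :: "real^'m \<Rightarrow> real^'m \<Rightarrow> real" and \<beta> M m :: real
  assumes dim: "CARD('m) = Suc CARD('k)"
    and beta: "\<beta> > 0"
    and G_smooth: "smooth_on_set {(x, X). x \<in> sphere 0 1 \<and> x \<bullet> X > 0} (\<lambda>(x, X). G x X)"
    and G_pos: "\<forall>x\<in>sphere 0 1. \<forall>X. x \<bullet> X > 0 \<longrightarrow> G x X > 0"
    and lim_top: "Limsup at_top (\<lambda>s. ereal ((SUP x\<in>sphere 0 1. G x (s *\<^sub>R x)) * s powr \<beta>)) < 1"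
    and lim_zero: "1 < Liminf (at_right 0) (\<lambda>s. ereal ((INF x\<in>sphere 0 1. G x (s *\<^sub>R x)) * s powr \<beta>))"
  shows "\<exists>C>0. \<forall>(F :: real^'k \<Rightarrow> real) u T.
           admissible_F \<beta> F \<and> flow_solution G \<beta> F u T \<and>
           (SUP x\<in>sphere 0 1. u x 0) = M \<and> (INF x\<in>sphere 0 1. u x 0) = m
           \<longrightarrow> (\<forall>x\<in>sphere 0 1. \<forall>t. 0 \<le> t \<and> ereal t < T \<longrightarrow> 1 / C \<le> u x t \<and> u x t \<le> C)"
proof -
  have "eventually (\<lambda>s. ereal ((SUP x\<in>sphere 0 1. G x (s *\<^sub>R x)) * s powr \<beta>) < 1) at_top"
    by (rule Limsup_lessD[OF lim_top])
  then obtain N where N: "\<And>s. s \<ge> N \<Longrightarrow> ereal ((SUP x\<in>sphere 0 1. G x (s *\<^sub>R x)) * s powr \<beta>) < 1"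
    by (auto simp: eventually_at_top_linorder)
  have "eventually (\<lambda>s. 1 < ereal ((INF x\<in>sphere 0 1. G x (s *\<^sub>R x)) * s powr \<beta>)) (at_right 0)"
    by (rule less_LiminfD[OF lim_zero])
  then obtain \<delta> :: real where \<delta>: "\<delta> > 0" "\<And>s. s > 0 \<Longrightarrow> s < \<delta> \<Longrightarrow> 1 < ereal ((INF x\<in>sphere 0 1. G x (s *\<^sub>R x)) * s powr \<beta>)"
    using eventually_at_right[of "0::real" 1] by auto
  define C where "C = max (max 1 (max M (max N 1))) (max (1 / \<delta>) (1 / m))"
  have C: "C \<ge> 1" "C \<ge> max M (max N 1)" "C \<ge> 1 / \<delta>" "C \<ge> 1 / m" by (auto simp: C_def)
  have Cpos: "C > 0" using C(1) by simp
  have Cd: "1 / C \<le> \<delta>"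
  proof -
    have "1 \<le> C * \<delta>" using C(3) \<delta>(1) by (simp add: divide_le_eq)
    then show ?thesis using Cpos by (simp add: divide_le_eq mult.commute)
  qed
  have Cm: "1 / C \<le> m" if "m > 0"
  proof -
    have "1 \<le> C * m" using C(4) that by (simp add: divide_le_eq)
    then show ?thesis using Cpos by (simp add: divide_le_eq mult.commute)
  qed
  show ?thesis
  proof (rule exI[of _ C], rule conjI[OF Cpos], intro allI impI ballI)
    fix F :: "real^'k \<Rightarrow> real" and u :: "real^'m \<Rightarrow> real \<Rightarrow> real" and T :: ereal and x :: "real^'m" and t :: real
    assume H: "admissible_F \<beta> F \<and> flow_solution G \<beta> F u T \<and>
           (SUP x\<in>sphere 0 1. u x 0) = M \<and> (INF x\<in>sphere 0 1. u x 0) = m"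
      and x: "x \<in> sphere 0 1" and t: "0 \<le> t \<and> ereal t < T"
    have adm: "admissible_F \<beta> F" and fl: "flow_solution G \<beta> F u T"
      and Meq: "(SUP x\<in>sphere 0 1. u x 0) = M" and meq: "(INF x\<in>sphere 0 1. u x 0) = m"
      using H by auto
    have t1: "0 \<le> t" and t2: "ereal t < T" using t by auto
    have up: "u x t \<le> max M (max N 1)"
      by (rule upper_bound[OF dim beta G_smooth G_pos N adm fl Meq x t1 t2])
    have lo: "u x t \<ge> \<delta> \<or> (m > 0 \<and> u x t \<ge> m)"
      by (rule lower_bound[OF dim beta G_pos \<delta>(2) adm fl meq x t1 t2])
    show "1 / C \<le> u x t \<and> u x t \<le> C"
    proof
      show "u x t \<le> C" using up C(2) by linarith
      show "1 / C \<le> u x t" using lo Cd Cm by force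
    qed
  qed
qed

end
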